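(* Consider the 2D pure diffusion equation $u_t = d_{11} u_{x_1x_1} + d_{22} u_{x_2x_2} + (d_{12}+d_{21}) u_{x_1x_2}$ on the unit square $[0,1]^2$ with periodic boundary condition, where $D=(d_{ij})\in\mathbb R^{2\times2}$ is positive semi-definite and $|d_{12}+d_{21}|\le 2\gamma\sqrt{d_{11}d_{22}}$ with $\gamma\in[0,1]$. Let the semi-discrete system $u'=F_0(u)+F_1(u)+F_2(u)$ ($s=2$) be obtained by central second-order finite difference discretization on a uniform Cartesian grid with mesh-width $h$ in both directions, with $F_0$ the mixed-derivative part and $F_j$ the second-derivative part in the $x_j$-direction ($j=1,2$). Consider the two-step ($k=2$) modified stabilizing correction method $$v_0=\sum_{i=1}^2\Big(a_iu_{n-i}+\Delta t\,\hat b_iF_0(u_{n-i})+\Delta t\,\check b_i\sum_{j=1}^2F_j(u_{n-i})\Big),$$ $$v_j=v_{j-1}+\Delta t\sum_{i=1}^2(b_i-\check b_i)F_j(u_{n-i})+\Delta t\,\theta F_j(v_j)\ (j=1,2),\qquad u_n=v_2,$$ with coefficients given by one of: (CNLF) $a=(0,1)$, $b=(0,1)$, $\hat b=(2,0)$, $\check b=(1,1)$, $\theta=1$; (BDF2-type) $a=(\tfrac43,-\tfrac13)$, $b=(\tfrac43-2\theta,-\tfrac23+\theta)$, $\hat b=(\tfrac43,-\tfrac23)$, $\check b=(\tfrac43-\theta,-\tfrac23+\theta)$; (Adams2-type) $a=(1,0)$, $b=(\tfrac32-2\theta,-\tfrac12+\theta)$, $\hat b=(\tfrac32,-\tfrac12)$,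 $\check b=(\tfrac32-\theta,-\tfrac12+\theta)$. Then these three methods are unconditionally stable (in the discrete $L_2$-norm, for all $r=\Delta t/h^2>0$) for the following parameter values $\theta$: CNLF: $\theta = 1$; BDF2-type: $\theta \geq\max\left\{\frac{1}{2}, \frac{\gamma+1}{2+2/\sqrt{3}} \right\}$; Adams2-type: $\theta \geq\max\left\{\frac{1}{2}, \frac{\gamma+1}{3} \right\}$.
   Context: Stability is understood via von Neumann analysis: the matrices are normal and commuting with scaled eigenvalues $z_j=-2rd_{jj}(1-\cos\phi_j)$ ($j=1,2$), $z_0=-r(d_{12}+d_{21})\sin\phi_1\sin\phi_2$, $r=\Delta t/h^2$, $\phi_j\in[0,2\pi]$, and stability means that the characteristic polynomial $\zeta^2-r_1\zeta-r_2$ satisfies the root condition (all roots of modulus $\le1$, those of modulus one simple), where $r_i=\frac1p\big(a_i+\hat b_iz_0+\check b_i(z_1+z_2)+\frac1\theta(b_i-\check b_i)(1-p)\big)$, $p=(1-\theta z_1)(1-\theta z_2)$. Here $\theta=b_0$. *)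

theory Defs
  imports "HOL-Computational_Algebra.Polynomial" Complex_Main
begin

definition char_poly :: "real \<Rightarrow> real \<Rightarrow> complex poly" where
  "char_poly r1 r2 = [:- complex_of_real r2, - complex_of_real r1, 1:]"

definition root_condition :: "complex poly \<Rightarrow> bool" where
  "root_condition p \<longleftrightarrow>
     (\<forall>z. poly p z = 0 \<longrightarrow> cmod z \<le> 1 \<and> (cmod z = 1 \<longrightarrow> order z p = 1))"

text \<open>Amplification coefficient r_i of the modified stabilizing correction method,
  coefficient sequences indexed by i = 1, 2.\<close>
definition msc_coeff ::
  "(nat \<Rightarrow> real) \<Rightarrow> (nat \<Rightarrow> real) \<Rightarrow> (nat \<Rightarrow> real) \<Rightarrow> (nat \<Rightarrow> real) \<Rightarrow> real
   \<Rightarrow> nat \<Rightarrow> real \<Rightarrow> real \<Rightarrow> real \<Rightarrow> real" where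
  "msc_coeff a b bh bc \<theta> i z0 z1 z2 =
     (let p = (1 - \<theta> * z1) * (1 - \<theta> * z2)
      in (a i + bh i * z0 + bc i * (z1 + z2) + (1 / \<theta>) * (b i - bc i) * (1 - p)) / p)"

text \<open>Von Neumann (unconditional) stability for the 2D diffusion problem with
  diffusion matrix entries d11 d12 d21 d22: root condition for all r > 0 and all
  frequencies phi1, phi2 in [0, 2 pi].\<close>
definition vn_stable ::
  "(nat \<Rightarrow> real) \<Rightarrow> (nat \<Rightarrow> real) \<Rightarrow> (nat \<Rightarrow> real) \<Rightarrow> (nat \<Rightarrow> real) \<Rightarrow> real
   \<Rightarrow> real \<Rightarrow> real \<Rightarrow> real \<Rightarrow> real \<Rightarrow> bool" where
  "vn_stable a b bh bc \<theta> d11 d12 d21 d22 \<longleftrightarrow>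
     (\<forall>r::real. r > 0 \<longrightarrow>
       (\<forall>\<phi>1 \<in> {0..2*pi}. \<forall>\<phi>2 \<in> {0..2*pi}.
          (let z1 = - 2 * r * d11 * (1 - cos \<phi>1);
               z2 = - 2 * r * d22 * (1 - cos \<phi>2);
               z0 = - r * (d12 + d21) * sin \<phi>1 * sin \<phi>2
           in root_condition
                (char_poly (msc_coeff a b bh bc \<theta> 1 z0 z1 z2)
                           (msc_coeff a b bh bc \<theta> 2 z0 z1 z2)))))"

definition pair2 :: "real \<Rightarrow> real \<Rightarrow> nat \<Rightarrow> real" where
  "pair2 x y i = (if i = 1 then x else y)"

definition cnlf_a where "cnlf_a = pair2 0 1"
definition cnlf_b where "cnlf_b = pair2 0 1"
definition cnlf_bh where "cnlf_bh = pair2 2 0"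
definition cnlf_bc where "cnlf_bc = pair2 1 1"

definition bdf2_a where "bdf2_a = pair2 (4/3) (-1/3)"
definition bdf2_b where "bdf2_b \<theta> = pair2 (4/3 - 2*\<theta>) (-2/3 + \<theta>)"
definition bdf2_bh where "bdf2_bh = pair2 (4/3) (-2/3)"
definition bdf2_bc where "bdf2_bc \<theta> = pair2 (4/3 - \<theta>) (-2/3 + \<theta>)"

definition adams2_a where "adams2_a = pair2 1 0"
definition adams2_b where "adams2_b \<theta> = pair2 (3/2 - 2*\<theta>) (-1/2 + \<theta>)"
definition adams2_bh where "adams2_bh = pair2 (3/2) (-1/2)"
definition adams2_bc where "adams2_bc \<theta> = pair2 (3/2 - \<theta>) (-1/2 + \<theta>)"

end

theory Submission
  imports Defs
begin

lemma root_cond: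
  fixes r1 r2 :: real
  assumes "-1 < r2" "r2 \<le> 1" "\<bar>r1\<bar> \<le> 1 - r2"
  shows "root_condition (char_poly r1 r2)"
  unfolding root_condition_def
proof (intro allI impI)
  fix z :: complex
  let ?p = "char_poly r1 r2"
  assume z: "poly ?p z = 0"
  have pnz: "?p \<noteq> 0" by (simp add: char_poly_def)
  have eq: "z * z - r1 * z - r2 = 0" using z
    by (simp add: char_poly_def algebra_simps)
  define x where "x = Re z"
  define y where "y = Im z"
  have re: "x*x - y*y - r1*x - r2 = 0"
    using arg_cong[OF eq, of Re] by (simp add: x_def y_def)
  have im: "2*x*y - r1*y = 0"
    using arg_cong[OF eq, of Im] by (simp add: x_def y_def algebra_simps)
  have nm: "(cmod z)^2 = x*x + y*y"
    unfolding x_def y_def by (metis cmod_power2 power2_eq_square)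
  have main: "x*x + y*y \<le> 1 \<and> (x*x + y*y = 1 \<longrightarrow> 2*z \<noteq> r1)"
  proof (cases "y = 0")
    case False
    have "y*(2*x - r1) = 0" using im by (simp add: algebra_simps)
    then have r1e: "r1 = 2*x" using False by simp
    have "x*x + y*y = - r2" using re unfolding r1e by (simp add: algebra_simps)
    then show ?thesis using assms by auto
  next
    case True
    then have r: "x*x - r1*x - r2 = 0" using re by simp
    have lo: "x \<ge> -1"
    proof (rule ccontr)
      assume "\<not> x \<ge> -1"
      then have "(-1 - x) * (1 - x + r1) > 0" using assms
        by (intro mult_pos_pos) auto
      then show False using r assms by (simp add: algebra_simps) 
    qed
    have hi: "x \<le> 1"
    proof (rule ccontr)
      assume "\<not> x \<le> 1"
      then have "(x - 1) * (x + 1 - r1) > 0" using assms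
        by (intro mult_pos_pos) auto
      then show False using r assms by (simp add: algebra_simps)
    qed
    have "x*x \<le> 1" using lo hi
      by (metis abs_le_iff abs_mult_self_eq abs_square_le_1 minus_le_iff power2_eq_square)
    moreover have "x*x = 1 \<longrightarrow> 2*z \<noteq> r1"
    proof
      assume "x*x = 1"
      then have "\<bar>x\<bar> = 1" by (metis abs_mult_self_eq abs_square_eq_1 power2_eq_square)
      show "2*z \<noteq> r1"
      proof
        assume h: "2*z = complex_of_real r1"
        have "2*x = r1" using arg_cong[OF h, of Re] by (simp add: x_def)
        then show False using \<open>\<bar>x\<bar> = 1\<close> assms by auto
      qed
    qed
    ultimately show ?thesis using True by simp
  qed
  show "cmod z \<le> 1 \<and> (cmod z = 1 \<longrightarrow> order z ?p = 1)"
  proof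
    show "cmod z \<le> 1" using main nm abs_square_le_1[of "cmod z"] by simp
    show "cmod z = 1 \<longrightarrow> order z ?p = 1"
    proof
      assume "cmod z = 1"
      then have "2*z \<noteq> r1" using main nm by simp
      then have "poly (pderiv ?p) z \<noteq> 0"
        by (simp add: char_poly_def pderiv_pCons algebra_simps)
      then show "order z ?p = 1"
        using order_pderiv[OF pnz z] order_0I by simp
    qed
  qed
qed


lemma root_from:
  fixes p N1 N2 :: real
  assumes "p > 0" "p + N2 > 0" "N2 \<le> p" "N1 \<le> p - N2" "-N1 \<le> p - N2"
  shows "root_condition (char_poly (N1/p) (N2/p))"
proof (rule root_cond)
  show "-1 < N2/p" using assms by (simp add: field_simps)
  show "N2/p \<le> 1" using assms by (simp add: field_simps)
  have "\<bar>N1\<bar> \<le> p - N2" using assms by auto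
  then have "\<bar>N1\<bar>/p \<le> (p - N2)/p" using assms by (simp add: divide_right_mono)
  then show "\<bar>N1/p\<bar> \<le> 1 - N2/p" using assms by (simp add: diff_divide_distrib)
qed

lemma quad_nonneg:
  fixes a B c q :: real
  assumes "c > 0" "B^2 \<le> 4*a*c"
  shows "a + B*q + c*q^2 \<ge> 0"
proof -
  have "4*c*(a + B*q + c*q^2) = (2*c*q + B)^2 + (4*a*c - B^2)"
    by (simp add: power2_eq_square algebra_simps)
  also have "\<dots> \<ge> 0" using assms by simp
  finally have "4*c*(a + B*q + c*q^2) \<ge> 0" .
  then show ?thesis using assms
    by (simp add: zero_le_mult_iff)
qed

lemma sigma_ge:
  fixes z1 z2 q :: real
  assumes "z1 \<le> 0" "z2 \<le> 0" "q \<ge> 0" "q^2 = z1*z2"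
  shows "2*q \<le> -(z1+z2)"
proof -
  have e1: "(2*q)^2 = 4*(z1*z2)" using assms(4) by (simp add: power_mult_distrib)
  have e2: "(-(z1+z2))^2 = 4*(z1*z2) + (z1-z2)^2" by (simp add: power2_eq_square algebra_simps)
  have "(2*q)^2 \<le> (-(z1+z2))^2" using e1 e2 zero_le_power2[of "z1-z2"] by linarith
  moreover have "0 \<le> -(z1+z2)" using assms by linarith
  ultimately show ?thesis by (rule power2_le_imp_le)
qed

lemma msc_aux:
  fixes \<theta> x :: real
  assumes "\<theta> \<noteq> 0"
  shows "1 / \<theta> * x * (1 - (1 - \<theta> * z1) * (1 - \<theta> * z2)) = x * ((z1 + z2) - \<theta>*(z1*z2))"
  using assms by (simp add: field_simps)

lemma msc_gen:
  fixes \<theta> :: real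
  assumes "\<theta> \<noteq> 0"
  shows "msc_coeff a b bh bc \<theta> i z0 z1 z2 =
    (a i + bh i * z0 + bc i * (z1 + z2) + (b i - bc i) * ((z1 + z2) - \<theta>*(z1*z2)))
     / ((1 - \<theta>*z1)*(1 - \<theta>*z2))"
  unfolding msc_coeff_def Let_def msc_aux[OF assms] ..


lemma bdf2_pt:
  fixes \<theta> \<gamma> z0 z1 z2 q :: real
  assumes th: "\<theta> \<ge> 1/2" "\<theta>*(2 + 2/sqrt 3) \<ge> \<gamma> + 1"
    and g: "0 \<le> \<gamma>" "\<gamma> \<le> 1"
    and z: "z1 \<le> 0" "z2 \<le> 0" "q \<ge> 0" "q^2 = z1*z2" "\<bar>z0\<bar> \<le> 2*\<gamma>*q"
  shows "root_condition (char_poly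
     (msc_coeff bdf2_a (bdf2_b \<theta>) bdf2_bh (bdf2_bc \<theta>) \<theta> 1 z0 z1 z2)
     (msc_coeff bdf2_a (bdf2_b \<theta>) bdf2_bh (bdf2_bc \<theta>) \<theta> 2 z0 z1 z2))"
proof -
  have tnz: "\<theta> \<noteq> 0" using th by auto
  have qq: "z1*z2 = q*q" using z(4) by (simp add: power2_eq_square)
  define s where "s = -(z1+z2)"
  define p where "p = (1 - \<theta>*z1)*(1 - \<theta>*z2)"
  define N1 where "N1 = 4/3 + 4/3*z0 - (4/3 - 2*\<theta>)*s + \<theta>*\<theta>*(q*q)"
  define N2 where "N2 = -1/3 - 2/3*z0 - (\<theta> - 2/3)*s"
  have hp: "p = 1 + \<theta>*s + \<theta>*\<theta>*(q*q)"
    unfolding p_def s_def qq[symmetric] by (simp add: algebra_simps)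
  have c1: "msc_coeff bdf2_a (bdf2_b \<theta>) bdf2_bh (bdf2_bc \<theta>) \<theta> 1 z0 z1 z2 = N1/p"
    unfolding msc_gen[OF tnz] p_def[symmetric]
    by (rule arg_cong[where f="\<lambda>x. x/p"])
       (simp add: bdf2_a_def bdf2_b_def bdf2_bh_def bdf2_bc_def pair2_def N1_def s_def qq[symmetric] field_simps)
  have c2: "msc_coeff bdf2_a (bdf2_b \<theta>) bdf2_bh (bdf2_bc \<theta>) \<theta> 2 z0 z1 z2 = N2/p"
    unfolding msc_gen[OF tnz] p_def[symmetric]
    by (rule arg_cong[where f="\<lambda>x. x/p"])
       (simp add: bdf2_a_def bdf2_b_def bdf2_bh_def bdf2_bc_def pair2_def N2_def s_def field_simps)
  have sg: "2*q \<le> s" unfolding s_def using sigma_ge[OF z(1-4)] .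
  have gq: "\<gamma>*q \<le> q" using mult_right_mono[of \<gamma> 1 q] g z(3) by simp
  have z0u: "z0 \<le> 2*(\<gamma>*q)" "-2*(\<gamma>*q) \<le> z0" using z(5) by auto
  have ts: "\<theta>*s \<ge> 0" using th sg z(3) by simp
  have tq: "\<theta>*\<theta>*(q*q) \<ge> 0" by simp
  have p0: "p > 0" using hp ts tq by linarith
  have A: "p + N2 > 0"
  proof -
    have "p + N2 = 2/3 + 2/3*s + \<theta>*\<theta>*(q*q) - 2/3*z0" unfolding hp N2_def by (simp add: algebra_simps)
    then show ?thesis using sg gq z0u tq by linarith
  qed
  have B: "N2 \<le> p"
  proof -
    have e: "p - N2 = 4/3 + (2*\<theta> - 2/3)*s + \<theta>*\<theta>*(q*q) + 2/3*z0" unfolding hp N2_def by (simp add: algebra_simps)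
    have f1: "(2*\<theta> - 2/3)*(2*q) \<le> (2*\<theta> - 2/3)*s" using sg th by (intro mult_left_mono) auto
    have f2: "4/3 + (-2/3)*q + (1/4)*(q*q) \<ge> 0" using quad_nonneg[of "1/4" "-2/3" "4/3" q]
      by (simp add: power2_eq_square)
    have f3: "(1/4)*(q*q) \<le> \<theta>*\<theta>*(q*q)"
    proof -
      have "1/2*(1/2) \<le> \<theta>*\<theta>" using th by (intro mult_mono) auto
      then show ?thesis by (intro mult_right_mono) auto
    qed
    have f4: "(2*\<theta> - 2/3)*(2*q) = 4*(\<theta>*q) - 4/3*q" by (simp add: algebra_simps)
    have f5: "\<theta>*q \<ge> q/2" using mult_right_mono[of "1/2" \<theta> q] th z(3) by simp
    show ?thesis using e f1 f2 f3 f4 f5 gq z0u by linarith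
  qed
  have C: "N1 \<le> p - N2"
  proof -
    have "p - N2 - N1 = 2/3*s - 2/3*z0" unfolding hp N2_def N1_def by (simp add: algebra_simps)
    then show ?thesis using sg gq z0u by linarith
  qed
  have D: "-N1 \<le> p - N2"
  proof -
    have e: "p - N2 + N1 = 8/3 + (4*\<theta> - 2)*s + 2*(\<theta>*\<theta>*(q*q)) + 2*z0" unfolding hp N2_def N1_def by (simp add: algebra_simps)
    have f1: "(4*\<theta> - 2)*(2*q) \<le> (4*\<theta> - 2)*s" using sg th by (intro mult_left_mono) auto
    have f2: "8/3 + (8*\<theta> - 4 - 4*\<gamma>)*q + (2*(\<theta>*\<theta>))*(q*q) \<ge> 0"
    proof (cases "8*\<theta> - 4 - 4*\<gamma> \<ge> 0")
      case True
      then show ?thesis using z(3) by simp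
    next
      case False
      have s3: "sqrt 3 > 0" by simp
      have "\<gamma> + 1 \<le> 2*\<theta> + 2*\<theta>/sqrt 3" using th(2) by (simp add: algebra_simps)
      then have "-(8*\<theta> - 4 - 4*\<gamma>) \<le> 8*\<theta>/sqrt 3" by simp
      then have "(-(8*\<theta> - 4 - 4*\<gamma>))^2 \<le> (8*\<theta>/sqrt 3)^2"
        using False by (intro power_mono) auto
      also have "\<dots> = 64/3*(\<theta>*\<theta>)" by (simp add: power_divide power2_eq_square)
      finally have "(-(8*\<theta> - 4 - 4*\<gamma>))^2 \<le> 64/3*(\<theta>*\<theta>)" .
      then have "(8*\<theta> - 4 - 4*\<gamma>)^2 \<le> 4*(8/3)*(2*(\<theta>*\<theta>))" unfolding power2_minus by simp
      moreover have "2*(\<theta>*\<theta>) > 0" using th by simp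
      ultimately show ?thesis using quad_nonneg[of "2*(\<theta>*\<theta>)" "8*\<theta> - 4 - 4*\<gamma>" "8/3" q]
        by (simp add: power2_eq_square)
    qed
    have f4: "(4*\<theta> - 2)*(2*q) = 8*(\<theta>*q) - 4*q" by (simp add: algebra_simps)
    have f6: "(8*\<theta> - 4 - 4*\<gamma>)*q = 8*(\<theta>*q) - 4*q - 4*(\<gamma>*q)" by (simp add: algebra_simps)
    show ?thesis using e f1 f2 f4 f6 z0u by linarith
  qed
  show ?thesis unfolding c1 c2 by (rule root_from[OF p0 A B C D])
qed


lemma adams2_pt:
  fixes \<theta> \<gamma> z0 z1 z2 q :: real
  assumes th: "\<theta> \<ge> 1/2" "3*\<theta> \<ge> \<gamma> + 1"
    and g: "0 \<le> \<gamma>" "\<gamma> \<le> 1"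
    and z: "z1 \<le> 0" "z2 \<le> 0" "q \<ge> 0" "q^2 = z1*z2" "\<bar>z0\<bar> \<le> 2*\<gamma>*q"
  shows "root_condition (char_poly
     (msc_coeff adams2_a (adams2_b \<theta>) adams2_bh (adams2_bc \<theta>) \<theta> 1 z0 z1 z2)
     (msc_coeff adams2_a (adams2_b \<theta>) adams2_bh (adams2_bc \<theta>) \<theta> 2 z0 z1 z2))"
proof -
  have tnz: "\<theta> \<noteq> 0" using th by auto
  have qq: "z1*z2 = q*q" using z(4) by (simp add: power2_eq_square)
  define s where "s = -(z1+z2)"
  define p where "p = (1 - \<theta>*z1)*(1 - \<theta>*z2)"
  define N1 where "N1 = 1 + 3/2*z0 - (3/2 - 2*\<theta>)*s + \<theta>*\<theta>*(q*q)"
  define N2 where "N2 = -1/2*z0 - (\<theta> - 1/2)*s"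
  have hp: "p = 1 + \<theta>*s + \<theta>*\<theta>*(q*q)"
    unfolding p_def s_def qq[symmetric] by (simp add: algebra_simps)
  have c1: "msc_coeff adams2_a (adams2_b \<theta>) adams2_bh (adams2_bc \<theta>) \<theta> 1 z0 z1 z2 = N1/p"
    unfolding msc_gen[OF tnz] p_def[symmetric]
    by (rule arg_cong[where f="\<lambda>x. x/p"])
       (simp add: adams2_a_def adams2_b_def adams2_bh_def adams2_bc_def pair2_def N1_def s_def qq[symmetric] field_simps)
  have c2: "msc_coeff adams2_a (adams2_b \<theta>) adams2_bh (adams2_bc \<theta>) \<theta> 2 z0 z1 z2 = N2/p"
    unfolding msc_gen[OF tnz] p_def[symmetric]
    by (rule arg_cong[where f="\<lambda>x. x/p"])
       (simp add: adams2_a_def adams2_b_def adams2_bh_def adams2_bc_def pair2_def N2_def s_def field_simps)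
  have sg: "2*q \<le> s" unfolding s_def using sigma_ge[OF z(1-4)] .
  have gq: "\<gamma>*q \<le> q" using mult_right_mono[of \<gamma> 1 q] g z(3) by simp
  have z0u: "z0 \<le> 2*(\<gamma>*q)" "-2*(\<gamma>*q) \<le> z0" using z(5) by auto
  have ts: "\<theta>*s \<ge> 0" using th sg z(3) by simp
  have tq: "\<theta>*\<theta>*(q*q) \<ge> 0" by simp
  have p0: "p > 0" using hp ts tq by linarith
  have A: "p + N2 > 0"
  proof -
    have "p + N2 = 1 + 1/2*s + \<theta>*\<theta>*(q*q) - 1/2*z0" unfolding hp N2_def by (simp add: algebra_simps)
    then show ?thesis using sg gq z0u tq by linarith
  qed
  have B: "N2 \<le> p"
  proof -
    have e: "p - N2 = 1 + (2*\<theta> - 1/2)*s + \<theta>*\<theta>*(q*q) + 1/2*z0" unfolding hp N2_def by (simp add: algebra_simps)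
    have f1: "(2*\<theta> - 1/2)*(2*q) \<le> (2*\<theta> - 1/2)*s" using sg th by (intro mult_left_mono) auto
    have f4: "(2*\<theta> - 1/2)*(2*q) = 4*(\<theta>*q) - q" by (simp add: algebra_simps)
    have f5: "\<theta>*q \<ge> q/2" using mult_right_mono[of "1/2" \<theta> q] th z(3) by simp
    show ?thesis using e f1 f4 f5 gq z0u tq by linarith
  qed
  have C: "N1 \<le> p - N2"
  proof -
    have "p - N2 - N1 = s - z0" unfolding hp N2_def N1_def by (simp add: algebra_simps)
    then show ?thesis using sg gq z0u by linarith
  qed
  have D: "-N1 \<le> p - N2"
  proof -
    have e: "p - N2 + N1 = 2 + (4*\<theta> - 2)*s + 2*(\<theta>*\<theta>*(q*q)) + 2*z0" unfolding hp N2_def N1_def by (simp add: algebra_simps)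
    have f1: "(4*\<theta> - 2)*(2*q) \<le> (4*\<theta> - 2)*s" using sg th by (intro mult_left_mono) auto
    have f2: "2 + (8*\<theta> - 4 - 4*\<gamma>)*q + (2*(\<theta>*\<theta>))*(q*q) \<ge> 0"
    proof (cases "8*\<theta> - 4 - 4*\<gamma> \<ge> 0")
      case True
      then show ?thesis using z(3) by simp
    next
      case False
      have "-(8*\<theta> - 4 - 4*\<gamma>) \<le> 4*\<theta>" using th(2) by simp
      then have "(-(8*\<theta> - 4 - 4*\<gamma>))^2 \<le> (4*\<theta>)^2"
        using False by (intro power_mono) auto
      then have "(8*\<theta> - 4 - 4*\<gamma>)^2 \<le> 4*2*(2*(\<theta>*\<theta>))" unfolding power2_minus
        by (simp add: power2_eq_square)
      moreover have "2*(\<theta>*\<theta>) > 0" using th by simp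
      ultimately show ?thesis using quad_nonneg[of "2*(\<theta>*\<theta>)" "8*\<theta> - 4 - 4*\<gamma>" "2" q]
        by (simp add: power2_eq_square)
    qed
    have f4: "(4*\<theta> - 2)*(2*q) = 8*(\<theta>*q) - 4*q" by (simp add: algebra_simps)
    have f6: "(8*\<theta> - 4 - 4*\<gamma>)*q = 8*(\<theta>*q) - 4*q - 4*(\<gamma>*q)" by (simp add: algebra_simps)
    show ?thesis using e f1 f2 f4 f6 z0u by linarith
  qed
  show ?thesis unfolding c1 c2 by (rule root_from[OF p0 A B C D])
qed

lemma cnlf_pt:
  fixes \<gamma> z0 z1 z2 q :: real
  assumes g: "0 \<le> \<gamma>" "\<gamma> \<le> 1"
    and z: "z1 \<le> 0" "z2 \<le> 0" "q \<ge> 0" "q^2 = z1*z2" "\<bar>z0\<bar> \<le> 2*\<gamma>*q"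
  shows "root_condition (char_poly
     (msc_coeff cnlf_a cnlf_b cnlf_bh cnlf_bc 1 1 z0 z1 z2)
     (msc_coeff cnlf_a cnlf_b cnlf_bh cnlf_bc 1 2 z0 z1 z2))"
proof -
  have tnz: "(1::real) \<noteq> 0" by simp
  have qq: "z1*z2 = q*q" using z(4) by (simp add: power2_eq_square)
  define s where "s = -(z1+z2)"
  define p where "p = (1 - 1*z1)*(1 - 1*z2)"
  define N1 where "N1 = 2*z0 + q*q"
  define N2 where "N2 = 1 - s"
  have hp: "p = 1 + s + q*q"
    unfolding p_def s_def qq[symmetric] by (simp add: algebra_simps)
  have c1: "msc_coeff cnlf_a cnlf_b cnlf_bh cnlf_bc 1 1 z0 z1 z2 = N1/p"
    unfolding msc_gen[OF tnz] p_def[symmetric]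
    by (rule arg_cong[where f="\<lambda>x. x/p"])
       (simp add: cnlf_a_def cnlf_b_def cnlf_bh_def cnlf_bc_def pair2_def N1_def s_def qq[symmetric] field_simps)
  have c2: "msc_coeff cnlf_a cnlf_b cnlf_bh cnlf_bc 1 2 z0 z1 z2 = N2/p"
    unfolding msc_gen[OF tnz] p_def[symmetric]
    by (rule arg_cong[where f="\<lambda>x. x/p"])
       (simp add: cnlf_a_def cnlf_b_def cnlf_bh_def cnlf_bc_def pair2_def N2_def s_def field_simps)
  have sg: "2*q \<le> s" unfolding s_def using sigma_ge[OF z(1-4)] .
  have gq: "\<gamma>*q \<le> q" using mult_right_mono[of \<gamma> 1 q] g z(3) by simp
  have z0u: "z0 \<le> 2*(\<gamma>*q)" "-2*(\<gamma>*q) \<le> z0" using z(5) by auto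
  have tq: "q*q \<ge> 0" by simp
  have p0: "p > 0" using hp sg z(3) tq by linarith
  have A: "p + N2 > 0" unfolding hp N2_def using tq by linarith
  have B: "N2 \<le> p" unfolding hp N2_def using tq sg z(3) by linarith
  have C: "N1 \<le> p - N2" unfolding hp N2_def N1_def using sg gq z0u tq by linarith
  have D: "-N1 \<le> p - N2" unfolding hp N2_def N1_def using sg gq z0u tq by linarith
  show ?thesis unfolding c1 c2 by (rule root_from[OF p0 A B C D])
qed


lemma sin_sq_le: "(sin (x::real))^2 \<le> 2*(1 - cos x)"
proof -
  have "(sin x)^2 = (1 - cos x)*(1 + cos x)" using sin_squared_eq[of x]
    by (simp add: power2_eq_square algebra_simps)
  also have "\<dots> \<le> (1 - cos x)*2" using cos_le_one[of x] by (intro mult_left_mono) auto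
  finally show ?thesis by simp
qed

lemma z_bounds:
  fixes r d11 d12 d21 d22 \<gamma> \<phi>1 \<phi>2 :: real
  assumes d: "d11 \<ge> 0" "d22 \<ge> 0" and r: "r > 0" and g: "\<gamma> \<ge> 0"
    and mixed: "\<bar>d12 + d21\<bar> \<le> 2 * \<gamma> * sqrt (d11 * d22)"
  defines "z1 \<equiv> - 2 * r * d11 * (1 - cos \<phi>1)"
    and "z2 \<equiv> - 2 * r * d22 * (1 - cos \<phi>2)"
    and "z0 \<equiv> - r * (d12 + d21) * sin \<phi>1 * sin \<phi>2"
  shows "z1 \<le> 0" "z2 \<le> 0" "\<bar>z0\<bar> \<le> 2*\<gamma>*sqrt (z1*z2)"
proof -
  have c1: "1 - cos \<phi>1 \<ge> 0" "1 - cos \<phi>2 \<ge> 0" using cos_le_one by auto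
  show "z1 \<le> 0" unfolding z1_def using d r c1 by simp
  show "z2 \<le> 0" unfolding z2_def using d r c1 by simp
  have X: "(d12+d21)^2 \<le> 4*\<gamma>^2*(d11*d22)"
  proof -
    have "(d12+d21)^2 = \<bar>d12+d21\<bar>^2" by simp
    also have "\<dots> \<le> (2 * \<gamma> * sqrt (d11 * d22))^2" using mixed by (intro power_mono) auto
    also have "\<dots> = 4*\<gamma>^2*(d11*d22)" using d by (simp add: power_mult_distrib)
    finally show ?thesis .
  qed
  have a: "(sin \<phi>1)^2 \<le> 2*(1 - cos \<phi>1)" "(sin \<phi>2)^2 \<le> 2*(1 - cos \<phi>2)" by (rule sin_sq_le)+
  have "z0^2 = r^2 * ((d12+d21)^2 * ((sin \<phi>1)^2 * (sin \<phi>2)^2))"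
    unfolding z0_def power_mult_distrib by (simp only: power2_minus mult_ac)
  also have "\<dots> \<le> r^2 * ((4*\<gamma>^2*(d11*d22)) * ((2*(1 - cos \<phi>1)) * (2*(1 - cos \<phi>2))))"
  proof -
    have s: "(sin \<phi>1)^2 * (sin \<phi>2)^2 \<le> (2*(1 - cos \<phi>1)) * (2*(1 - cos \<phi>2))"
      by (rule mult_mono[OF a]) (use c1 in auto)
    have "(d12+d21)^2 * ((sin \<phi>1)^2 * (sin \<phi>2)^2) \<le> (4*\<gamma>^2*(d11*d22)) * ((2*(1 - cos \<phi>1)) * (2*(1 - cos \<phi>2)))"
      by (rule mult_mono[OF X s]) (use d in auto)
    then show ?thesis by (rule mult_left_mono) simp
  qed
  also have "\<dots> = (2*\<gamma>)^2 * (z1*z2)"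
    unfolding z1_def z2_def by (simp add: power2_eq_square algebra_simps)
  finally have "z0^2 \<le> (2*\<gamma>)^2 * (z1*z2)" .
  then have "sqrt (z0^2) \<le> sqrt ((2*\<gamma>)^2 * (z1*z2))" by (rule real_sqrt_le_mono)
  then show "\<bar>z0\<bar> \<le> 2*\<gamma>*sqrt (z1*z2)" using g by (simp add: real_sqrt_mult)
qed

theorem theorem2:
  fixes d11 d12 d21 d22 \<gamma> \<theta> :: real
  assumes psd: "\<forall>x1 x2::real. d11 * x1^2 + (d12 + d21) * x1 * x2 + d22 * x2^2 \<ge> 0"
    and gamma: "0 \<le> \<gamma>" "\<gamma> \<le> 1"
    and mixed: "\<bar>d12 + d21\<bar> \<le> 2 * \<gamma> * sqrt (d11 * d22)"
  shows "vn_stable cnlf_a cnlf_b cnlf_bh cnlf_bc 1 d11 d12 d21 d22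
    \<and> (\<theta> \<ge> max (1/2) ((\<gamma> + 1) / (2 + 2 / sqrt 3)) \<longrightarrow>
         vn_stable bdf2_a (bdf2_b \<theta>) bdf2_bh (bdf2_bc \<theta>) \<theta> d11 d12 d21 d22)
    \<and> (\<theta> \<ge> max (1/2) ((\<gamma> + 1) / 3) \<longrightarrow>
         vn_stable adams2_a (adams2_b \<theta>) adams2_bh (adams2_bc \<theta>) \<theta> d11 d12 d21 d22)"
proof -
  have d11: "d11 \<ge> 0" using psd[rule_format, of 1 0] by simp
  have d22: "d22 \<ge> 0" using psd[rule_format, of 0 1] by simp
  have key: "\<And>r \<phi>1 \<phi>2. r > 0 \<Longrightarrow>
      (let z1 = - 2 * r * d11 * (1 - cos \<phi>1); z2 = - 2 * r * d22 * (1 - cos \<phi>2) in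
         z1 \<le> 0 \<and> z2 \<le> 0 \<and> sqrt (z1*z2) \<ge> 0 \<and> (sqrt (z1*z2))^2 = z1*z2 \<and>
         \<bar>- r * (d12 + d21) * sin \<phi>1 * sin \<phi>2\<bar> \<le> 2*\<gamma>*sqrt (z1*z2))"
  proof -
    fix r \<phi>1 \<phi>2 :: real
    assume r: "r > 0"
    have zb1: "- 2 * r * d11 * (1 - cos \<phi>1) \<le> 0"
      by (rule z_bounds(1)[OF d11 d22 r gamma(1) mixed])
    have zb2: "- 2 * r * d22 * (1 - cos \<phi>2) \<le> 0"
      by (rule z_bounds(2)[OF d11 d22 r gamma(1) mixed])
    have zb3: "\<bar>- r * (d12 + d21) * sin \<phi>1 * sin \<phi>2\<bar> \<le> 2*\<gamma>*sqrt ((- 2 * r * d11 * (1 - cos \<phi>1)) * (- 2 * r * d22 * (1 - cos \<phi>2)))"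
      by (rule z_bounds(3)[OF d11 d22 r gamma(1) mixed])
    note zb = zb1 zb2 zb3
    have "(- 2 * r * d11 * (1 - cos \<phi>1)) * (- 2 * r * d22 * (1 - cos \<phi>2)) \<ge> 0"
      by (rule mult_nonpos_nonpos[OF zb1 zb2])
    then show "?thesis r \<phi>1 \<phi>2" using zb unfolding Let_def by simp
  qed
  have S1: "vn_stable cnlf_a cnlf_b cnlf_bh cnlf_bc 1 d11 d12 d21 d22"
    unfolding vn_stable_def
  proof (intro allI impI ballI)
    fix r \<phi>1 \<phi>2 :: real
    assume "r > 0"
    from key[OF this, of \<phi>1 \<phi>2] show "let z1 = - 2 * r * d11 * (1 - cos \<phi>1);
               z2 = - 2 * r * d22 * (1 - cos \<phi>2);
               z0 = - r * (d12 + d21) * sin \<phi>1 * sin \<phi>2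
           in root_condition
                (char_poly (msc_coeff cnlf_a cnlf_b cnlf_bh cnlf_bc 1 1 z0 z1 z2)
                           (msc_coeff cnlf_a cnlf_b cnlf_bh cnlf_bc 1 2 z0 z1 z2))"
      unfolding Let_def using cnlf_pt[OF gamma] by blast
  qed
  have S2: "vn_stable bdf2_a (bdf2_b \<theta>) bdf2_bh (bdf2_bc \<theta>) \<theta> d11 d12 d21 d22"
    if th: "\<theta> \<ge> max (1/2) ((\<gamma> + 1) / (2 + 2 / sqrt 3))"
  proof -
    have t1: "\<theta> \<ge> 1/2" using th by simp
    have pos: "2 + 2 / sqrt 3 > (0::real)" by (simp add: add_pos_pos)
    have t2: "\<theta>*(2 + 2/sqrt 3) \<ge> \<gamma> + 1" using th pos by (simp add: pos_divide_le_eq)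
    show ?thesis unfolding vn_stable_def
    proof (intro allI impI ballI)
      fix r \<phi>1 \<phi>2 :: real
      assume "r > 0"
      from key[OF this, of \<phi>1 \<phi>2] show "let z1 = - 2 * r * d11 * (1 - cos \<phi>1);
                 z2 = - 2 * r * d22 * (1 - cos \<phi>2);
                 z0 = - r * (d12 + d21) * sin \<phi>1 * sin \<phi>2
             in root_condition
                  (char_poly (msc_coeff bdf2_a (bdf2_b \<theta>) bdf2_bh (bdf2_bc \<theta>) \<theta> 1 z0 z1 z2)
                             (msc_coeff bdf2_a (bdf2_b \<theta>) bdf2_bh (bdf2_bc \<theta>) \<theta> 2 z0 z1 z2))"
        unfolding Let_def using bdf2_pt[OF t1 t2 gamma] by blast
    qed
  qed
  have S3: "vn_stable adams2_a (adams2_b \<theta>) adams2_bh (adams2_bc \<theta>) \<theta> d11 d12 d21 d22"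
    if th: "\<theta> \<ge> max (1/2) ((\<gamma> + 1) / 3)"
  proof -
    have t1: "\<theta> \<ge> 1/2" using th by simp
    have t2: "3*\<theta> \<ge> \<gamma> + 1" using th by simp
    show ?thesis unfolding vn_stable_def
    proof (intro allI impI ballI)
      fix r \<phi>1 \<phi>2 :: real
      assume "r > 0"
      from key[OF this, of \<phi>1 \<phi>2] show "let z1 = - 2 * r * d11 * (1 - cos \<phi>1);
                 z2 = - 2 * r * d22 * (1 - cos \<phi>2);
                 z0 = - r * (d12 + d21) * sin \<phi>1 * sin \<phi>2
             in root_condition
                  (char_poly (msc_coeff adams2_a (adams2_b \<theta>) adams2_bh (adams2_bc \<theta>) \<theta> 1 z0 z1 z2)
                             (msc_coeff adams2_a (adams2_b \<theta>) adams2_bh (adams2_bc \<theta>) \<theta> 2 z0 z1 z2))"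
        unfolding Let_def using adams2_pt[OF t1 t2 gamma] by blast
    qed
  qed
  show ?thesis using S1 S2 S3 by blast
qed

end
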